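(* Let $\mathcal{W}=(Q,\Sigma,\delta,q_\iota,\mathrm{Acc})$ be a binary-branching probabilistic parity word automaton and write $\delta(q,a)=\{q_1,q_2\}$ for the two distinct states with $\delta(q,a,q_i)=\tfrac12$. Let $\mathcal{A}=(Q,\Sigma,\Delta,q_\iota,\mathrm{Acc})$ be the (non-probabilistic) parity tree automaton with $\Delta=\{(q,a,q_1,q_2),(q,a,q_2,q_1): q\in Q,a\in\Sigma,\delta(q,a)=\{q_1,q_2\}\}$. Then $\mathcal{L}^{=1}(\mathcal{W})=\varnothing$ iff $\mathcal{L}^{\forall}_{\mathrm{qual}}(\mathcal{A})=\varnothing$.
   Context: Probabilistic word automaton: $(Q,\Sigma,\delta,q_\iota,\mathrm{Acc})$, $Q$ finite, $\Sigma$ finite, $\delta:Q\times\Sigma\times Q\to[0,1]$ with $\sum_p\delta(q,a,p)=1$; runs on $w\in\Sigma^\omega$ are $r\in Q^\omega$ with $r_0=q_\iota$, $\delta(r_i,w_i,r_{i+1})>0$; $\mu_w$ is the induced measure on runs (cone of prefix $r_0\dots r_n$ has measure $\prod_{i<n}\delta(r_i,w_i,r_{i+1})$); $\mathcal{L}^{=1}(\mathcal{W})=\{w:\mu_w(\{r\in\mathrm{Acc}\})=1\}$. Binary branching: all transition probabilities lie in $\{0,\tfrac12\}$. Parity condition given by $\alpha:Q\to\{0,\dots,k\}$: $r\in Q^\omega$ is in $\mathrm{Acc}$ iff the minimum of $\alpha(q)$ over states occurring infinitely often in $r$ is even. A $\Sigma$-tree is a map $t:\{0,1\}^*\to\Sigma$;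 for a branch $\pi\in\{0,1\}^\omega$, $t(\pi)=t(\epsilon)t(\pi_0)t(\pi_0\pi_1)\cdots$. The coin-flipping measure $\mu$ on $\{0,1\}^\omega$ gives the cone $u\{0,1\}^\omega$ measure $2^{-|u|}$. A tree automaton is $(Q,\Sigma,\Delta,q_\iota,\mathrm{Acc})$ with $\Delta\subseteq Q\times\Sigma\times Q\times Q$; a run on $t$ is a $Q$-tree $\rho$ with $\rho(\epsilon)=q_\iota$ and $(\rho(u),t(u),\rho(u0),\rho(u1))\in\Delta$ for all $u\in\{0,1\}^*$; it is qualitatively accepting if $\mu(\{\pi:\rho(\pi)\in\mathrm{Acc}\})=1$. The qualitative universal language is $\mathcal{L}^{\forall}_{\mathrm{qual}}(\mathcal{A})=\{t:\text{every run of }\mathcal{A}\text{ on }t\text{ is qualitatively accepting}\}$. *)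

theory Defs
  imports "HOL-Probability.Probability"
begin

definition prob_word_aut :: "('q::finite \<Rightarrow> 'a \<Rightarrow> 'q \<Rightarrow> real) \<Rightarrow> bool" where
  "prob_word_aut \<delta> \<longleftrightarrow>
     (\<forall>q a p. 0 \<le> \<delta> q a p \<and> \<delta> q a p \<le> 1) \<and> (\<forall>q a. (\<Sum>p\<in>UNIV. \<delta> q a p) = 1)"

definition binary_branching :: "('q \<Rightarrow> 'a \<Rightarrow> 'q \<Rightarrow> real) \<Rightarrow> bool" where
  "binary_branching \<delta> \<longleftrightarrow> (\<forall>q a p. \<delta> q a p \<in> {0, 1/2})"

definition parity_acc :: "('q \<Rightarrow> nat) \<Rightarrow> (nat \<Rightarrow> 'q) \<Rightarrow> bool" where
  "parity_acc \<alpha> r \<longleftrightarrow> even (Min {\<alpha> q | q. \<exists>\<^sub>\<infinity> n. r n = q})"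

definition run_space :: "(nat \<Rightarrow> 'q) measure" where
  "run_space = (\<Pi>\<^sub>M i\<in>(UNIV::nat set). count_space (UNIV::'q set))"

text \<open>M is the measure mu_w induced on runs by the word w: a probability measure
  on Q^omega whose cone of a prefix r_0 ... r_n has measure
  prod_{i<n} delta(r_i, w_i, r_{i+1}) if r_0 is the initial state, and 0 otherwise
  (runs start in the initial state).\<close>
definition induced_run_measure ::
  "('q \<Rightarrow> 'a \<Rightarrow> 'q \<Rightarrow> real) \<Rightarrow> 'q \<Rightarrow> (nat \<Rightarrow> 'a) \<Rightarrow> (nat \<Rightarrow> 'q) measure \<Rightarrow> bool" where
  "induced_run_measure \<delta> q0 w M \<longleftrightarrow>
     prob_space M \<and> sets M = sets run_space \<and>
     (\<forall>n (x::nat \<Rightarrow> 'q). measure M {r \<in> space M. \<forall>i\<le>n. r i = x i} =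
        (if x 0 = q0 then (\<Prod>i<n. \<delta> (x i) (w i) (x (Suc i))) else 0))"

text \<open>Almost-sure language L^{=1}(W).  The induced measure exists and is unique,
  so quantifying over all such measures is the same as referring to mu_w.\<close>
definition lang_as :: "('q::finite \<Rightarrow> 'a \<Rightarrow> 'q \<Rightarrow> real) \<Rightarrow> 'q \<Rightarrow> ('q \<Rightarrow> nat) \<Rightarrow> (nat \<Rightarrow> 'a) set" where
  "lang_as \<delta> q0 \<alpha> = {w. \<forall>M. induced_run_measure \<delta> q0 w M \<longrightarrow>
                          measure M {r \<in> space M. parity_acc \<alpha> r} = 1}"

text \<open>Trees: bool list => 'a (False = direction 0, True = direction 1).\<close>
definition tree_run :: "('q \<times> 'a \<times> 'q \<times> 'q) set \<Rightarrow> 'q \<Rightarrow> (bool list \<Rightarrow> 'a) \<Rightarrow> (bool list \<Rightarrow> 'q) \<Rightarrow> bool" where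
  "tree_run \<Delta> q0 t \<rho> \<longleftrightarrow> \<rho> [] = q0 \<and>
     (\<forall>u. (\<rho> u, t u, \<rho> (u @ [False]), \<rho> (u @ [True])) \<in> \<Delta>)"

definition along :: "(bool list \<Rightarrow> 'b) \<Rightarrow> (nat \<Rightarrow> bool) \<Rightarrow> nat \<Rightarrow> 'b" where
  "along t \<pi> n = t (map \<pi> [0..<n])"

definition coin :: "(nat \<Rightarrow> bool) measure" where
  "coin = (\<Pi>\<^sub>M i\<in>(UNIV::nat set). measure_pmf (bernoulli_pmf (1/2)))"

definition qual_accepting :: "('q \<Rightarrow> nat) \<Rightarrow> (bool list \<Rightarrow> 'q) \<Rightarrow> bool" where
  "qual_accepting \<alpha> \<rho> \<longleftrightarrow> measure coin {\<pi> \<in> space coin. parity_acc \<alpha> (along \<rho> \<pi>)} = 1"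

definition lang_univ_qual ::
  "('q \<times> 'a \<times> 'q \<times> 'q) set \<Rightarrow> 'q \<Rightarrow> ('q \<Rightarrow> nat) \<Rightarrow> (bool list \<Rightarrow> 'a) set" where
  "lang_univ_qual \<Delta> q0 \<alpha> = {t. \<forall>\<rho>. tree_run \<Delta> q0 t \<rho> \<longrightarrow> qual_accepting \<alpha> \<rho>}"

definition derived_trans :: "('q \<Rightarrow> 'a \<Rightarrow> 'q \<Rightarrow> real) \<Rightarrow> ('q \<times> 'a \<times> 'q \<times> 'q) set" where
  "derived_trans \<delta> = {(q, a, q1, q2) | q a q1 q2.
      q1 \<noteq> q2 \<and> \<delta> q a q1 = 1/2 \<and> \<delta> q a q2 = 1/2}"

end

theory Submission
  imports Defs
begin


definition bits :: "('i \<Rightarrow> bool) measure" where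
  "bits = (\<Pi>\<^sub>M i\<in>(UNIV::'i set). measure_pmf (bernoulli_pmf (1/2)))"

lemma coin_bits: "coin = bits" by (simp add: coin_def bits_def)

lemma space_bits[simp]: "space bits = UNIV"
  by (auto simp: bits_def space_PiM)

lemma prob_space_bits: "prob_space bits"
  unfolding bits_def by (intro prob_space_PiM) (simp add: prob_space_measure_pmf)

lemma rect_eq: "{f. \<forall>j\<in>J. f j = c j} = prod_emb UNIV (\<lambda>_. measure_pmf (bernoulli_pmf (1/2))) J (\<Pi>\<^sub>E j\<in>J. {c j})"
  by (auto simp: prod_emb_iff restrict_PiE_iff)

lemma rect_sets: "finite J \<Longrightarrow> {f. \<forall>j\<in>J. f j = c j} \<in> sets bits"
  unfolding rect_eq bits_def by (intro sets_PiM_I) auto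

lemma rect_emeasure: "finite J \<Longrightarrow> emeasure bits {f. \<forall>j\<in>J. f j = c j} = ennreal ((1/2) ^ card J)"
proof -
  assume J: "finite J"
  have e: "\<And>j. emeasure (measure_pmf (bernoulli_pmf (1/2))) {c j} = ennreal (1/2)"
    by (simp add: emeasure_pmf_single)
  have "emeasure bits {f. \<forall>j\<in>J. f j = c j} = (\<Prod>j\<in>J. emeasure (measure_pmf (bernoulli_pmf (1/2))) {c j})"
    unfolding rect_eq bits_def by (rule emeasure_PiM_emb) (use J in \<open>auto simp: prob_space_measure_pmf\<close>)
  also have "\<dots> = (\<Prod>j\<in>J. ennreal (1/2))" by (simp only: e)
  also have "\<dots> = ennreal ((1/2)^card J)" by (simp only: prod_constant ennreal_power)
  finally show ?thesis .
qed

lemma rect_measure: "finite J \<Longrightarrow> measure bits {f. \<forall>j\<in>J. f j = c j} = (1/2) ^ card J"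
  by (simp add: measure_def rect_emeasure)

lemma fdep_meas:
  assumes J: "finite J" and h: "\<And>f g. (\<forall>j\<in>J. f j = g j) \<Longrightarrow> h f = h g"
  shows "h \<in> bits \<rightarrow>\<^sub>M count_space UNIV"
proof (rule measurableI)
  fix A :: "'b set"
  define C where "C = {c::'a\<Rightarrow>bool. \<forall>x. (x \<in> J \<longrightarrow> c x \<in> UNIV) \<and> (x \<notin> J \<longrightarrow> c x = False)}"
  have fC: "finite C" unfolding C_def by (rule finite_set_of_finite_funs) (use J in auto)
  have eq: "h -` A \<inter> space bits = (\<Union>c\<in>{c\<in>C. h c \<in> A}. {f. \<forall>j\<in>J. f j = c j})"
  proof (intro equalityI subsetI)
    fix f assume f: "f \<in> h -` A \<inter> space bits"
    define c where "c = (\<lambda>x. if x \<in> J then f x else False)"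
    have hc: "h c = h f" by (rule h) (simp add: c_def)
    have cC: "c \<in> C" unfolding C_def c_def by simp
    have hA: "h c \<in> A" using f hc by simp
    have fc: "f \<in> {f. \<forall>j\<in>J. f j = c j}" by (simp add: c_def)
    show "f \<in> (\<Union>c\<in>{c\<in>C. h c \<in> A}. {f. \<forall>j\<in>J. f j = c j})"
      using cC hA fc by blast
  next
    fix f assume "f \<in> (\<Union>c\<in>{c\<in>C. h c \<in> A}. {f. \<forall>j\<in>J. f j = c j})"
    then obtain c where "c \<in> C" "h c \<in> A" "\<forall>j\<in>J. f j = c j" by auto
    moreover have "h f = h c" using h[of f c] \<open>\<forall>j\<in>J. f j = c j\<close> by auto
    ultimately show "f \<in> h -` A \<inter> space bits" by auto
  qed
  show "h -` A \<inter> space bits \<in> sets bits"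
    unfolding eq using fC J by (intro sets.finite_UN rect_sets) auto
qed auto

lemma two_succ:
  assumes pw: "prob_word_aut \<delta>" and bb: "binary_branching \<delta>"
  shows "\<exists>p1 p2. p1 \<noteq> p2 \<and> {p. \<delta> q a p = 1/2} = {p1, p2}"
proof -
  let ?P = "{p. \<delta> q a p = 1/2}"
  have d: "\<delta> q a p = (if p \<in> ?P then 1/2 else 0)" for p
    using bb unfolding binary_branching_def by auto
  have "1 = (\<Sum>p\<in>UNIV. \<delta> q a p)" using pw unfolding prob_word_aut_def by auto
  also have "\<dots> = (\<Sum>p\<in>UNIV. if p \<in> ?P then 1/2 else 0)" by (subst d) simp
  also have "\<dots> = (\<Sum>p\<in>{p\<in>UNIV. p \<in> ?P}. 1/2)" by (subst sum.inter_filter) auto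
  also have "\<dots> = real (card ?P) / 2" by simp
  finally have "card ?P = 2" by linarith
  then show ?thesis by (auto simp: card_2_iff)
qed

lemma half_or_zero:
  assumes bb: "binary_branching \<delta>"
  shows "\<delta> q a p = 0 \<or> \<delta> q a p = 1/2"
  using bb unfolding binary_branching_def by auto

lemma derived_only:
  assumes pw: "prob_word_aut \<delta>" and bb: "binary_branching \<delta>"
    and tr: "(q, a, c0, c1) \<in> derived_trans \<delta>" and p: "\<delta> q a p = 1/2"
  shows "p = c0 \<or> p = c1"
proof -
  obtain p1 p2 where "p1 \<noteq> p2" and P: "{p. \<delta> q a p = 1/2} = {p1, p2}"
    using two_succ[OF pw bb] by blast
  have "c0 \<in> {p1,p2}" "c1 \<in> {p1,p2}" "p \<in> {p1,p2}" "c0 \<noteq> c1"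
    using tr p P unfolding derived_trans_def by blast+
  then show ?thesis by auto
qed

lemma cone_shape:
  assumes pw: "prob_word_aut \<delta>" and bb: "binary_branching \<delta>" and inj: "inj sel"
    and dep: "\<And>i f g. (\<And>j. j < i \<Longrightarrow> f (sel j) = g (sel j)) \<Longrightarrow> s i f = s i g"
    and s0: "\<And>f. s 0 f = q0"
    and step: "\<And>i f. (s i f, w i, s (Suc i) (f(sel i := False)), s (Suc i) (f(sel i := True))) \<in> derived_trans \<delta>"
    and x0: "x 0 = q0"
  shows "(\<exists>c. {f. \<forall>i\<le>n. s i f = x i} = {f. \<forall>j\<in>sel`{..<n}. f j = c j} \<and>
             (\<Prod>i<n. \<delta> (x i) (w i) (x (Suc i))) = (1/2)^n)
       \<or> ({f. \<forall>i\<le>n. s i f = x i} = {} \<and> (\<Prod>i<n. \<delta> (x i) (w i) (x (Suc i))) = 0)"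
proof (induction n)
  case 0
  have "{f. \<forall>i\<le>0. s i f = x i} = {f. \<forall>j\<in>sel`{..<0}. f j = (\<lambda>_. False) j}" using s0 x0 by auto
  moreover have "(\<Prod>i<0. \<delta> (x i) (w i) (x (Suc i))) = (1/2)^0" by simp
  ultimately show ?case by (intro disjI1 exI[of _ "\<lambda>_. False"] conjI)
next
  case (Suc n)
  have split: "{f. \<forall>i\<le>Suc n. s i f = x i} = {f \<in> {f. \<forall>i\<le>n. s i f = x i}. s (Suc n) f = x (Suc n)}"
    by (auto simp: le_Suc_eq)
  from Suc.IH show ?case
  proof
    assume "\<exists>c. {f. \<forall>i\<le>n. s i f = x i} = {f. \<forall>j\<in>sel`{..<n}. f j = c j} \<and>
             (\<Prod>i<n. \<delta> (x i) (w i) (x (Suc i))) = (1/2)^n"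
    then obtain c where R: "{f. \<forall>i\<le>n. s i f = x i} = {f. \<forall>j\<in>sel`{..<n}. f j = c j}"
      and pr: "(\<Prod>i<n. \<delta> (x i) (w i) (x (Suc i))) = (1/2)^n" by blast
    have "c \<in> {f. \<forall>i\<le>n. s i f = x i}" unfolding R by simp
    then have scn: "s n c = x n" by simp
    have key: "s (Suc n) f = s (Suc n) (c(sel n := f (sel n)))" if "f \<in> {f. \<forall>i\<le>n. s i f = x i}" for f
    proof (rule dep)
      fix j assume "j < Suc n"
      then show "f (sel j) = (c(sel n := f (sel n))) (sel j)"
        using that inj unfolding R by (cases "j = n") (auto simp: inj_eq)
    qed
    define c0 where "c0 = s (Suc n) (c(sel n := False))"
    define c1 where "c1 = s (Suc n) (c(sel n := True))"
    have tr: "(x n, w n, c0, c1) \<in> derived_trans \<delta>"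
      using step[of n c] scn unfolding c0_def c1_def by simp
    then have c01: "c0 \<noteq> c1" "\<delta> (x n) (w n) c0 = 1/2" "\<delta> (x n) (w n) c1 = 1/2"
      unfolding derived_trans_def by auto
    have fb: "s (Suc n) (c(sel n := b)) = (if b then c1 else c0)" for b
      by (cases b) (simp_all add: c0_def c1_def)
    have prS: "(\<Prod>i<Suc n. \<delta> (x i) (w i) (x (Suc i))) = (1/2)^n * \<delta> (x n) (w n) (x (Suc n))"
      using pr by simp
    from half_or_zero[OF bb, of "x n" "w n" "x (Suc n)"] show ?case
    proof
      assume z: "\<delta> (x n) (w n) (x (Suc n)) = 0"
      have "x (Suc n) \<noteq> c0" "x (Suc n) \<noteq> c1" using z c01 by auto
      have ne: "s (Suc n) f \<noteq> x (Suc n)" if f: "f \<in> {f. \<forall>i\<le>n. s i f = x i}" for f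
      proof -
        have e: "s (Suc n) f = (if f (sel n) then c1 else c0)" by (rule trans[OF key[OF f] fb])
        show ?thesis unfolding e using \<open>x (Suc n) \<noteq> c0\<close> \<open>x (Suc n) \<noteq> c1\<close> by (cases "f (sel n)") auto
      qed
      have "{f. \<forall>i\<le>Suc n. s i f = x i} = {}"
      proof (rule equals0I)
        fix f assume "f \<in> {f. \<forall>i\<le>Suc n. s i f = x i}"
        then have "f \<in> {f. \<forall>i\<le>n. s i f = x i}" "s (Suc n) f = x (Suc n)" by auto
        then show False using ne by blast
      qed
      moreover have "(\<Prod>i<Suc n. \<delta> (x i) (w i) (x (Suc i))) = 0" using prS z by simp
      ultimately show ?case by (intro disjI2 conjI)
    next
      assume h: "\<delta> (x n) (w n) (x (Suc n)) = 1/2"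
      have "x (Suc n) = c0 \<or> x (Suc n) = c1" by (rule derived_only[OF pw bb tr h])
      then obtain b where b: "x (Suc n) = (if b then c1 else c0)" by (metis (full_types))
      have bu: "(if b' then c1 else c0) = x (Suc n) \<longleftrightarrow> b' = b" for b'
        using b c01(1) by auto
      have "{f. \<forall>i\<le>Suc n. s i f = x i} = {f. \<forall>j\<in>sel`{..<Suc n}. f j = (c(sel n := b)) j}"
      proof (intro equalityI subsetI)
        fix f assume f: "f \<in> {f. \<forall>i\<le>Suc n. s i f = x i}"
        then have f1: "f \<in> {f. \<forall>i\<le>n. s i f = x i}" by auto
        have "s (Suc n) f = x (Suc n)" using f by auto
        then have "(if f (sel n) then c1 else c0) = x (Suc n)"
          using trans[OF key[OF f1] fb] by simp
        then have "f (sel n) = b" using bu by blast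
        moreover have "\<forall>j\<in>sel`{..<n}. f j = c j" using f1 unfolding R by simp
        ultimately have "\<forall>j\<in>sel`{..<Suc n}. f j = (c(sel n := b)) j"
        proof (intro ballI)
          fix j assume fb': "f (sel n) = b" and fc: "\<forall>j\<in>sel`{..<n}. f j = c j" and j: "j \<in> sel`{..<Suc n}"
          show "f j = (c(sel n := b)) j"
          proof (cases "j = sel n")
            case True then show ?thesis using fb' by simp
          next
            case False
            then have "j \<in> sel`{..<n}" using j by (auto simp: lessThan_Suc)
            with fc False show ?thesis by (metis fun_upd_other)
          qed
        qed
        then show "f \<in> {f. \<forall>j\<in>sel`{..<Suc n}. f j = (c(sel n := b)) j}" by simp
      next
        fix f assume f: "f \<in> {f. \<forall>j\<in>sel`{..<Suc n}. f j = (c(sel n := b)) j}"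
        have fn: "f (sel n) = b" using f by auto
        have "\<forall>j\<in>sel`{..<n}. f j = c j"
        proof
          fix j assume j: "j \<in> sel`{..<n}"
          then have "j \<noteq> sel n" using inj by (auto simp: inj_eq)
          then show "f j = c j" using f j by auto
        qed
        then have f1: "f \<in> {f. \<forall>i\<le>n. s i f = x i}" unfolding R by simp
        have "s (Suc n) f = (if b then c1 else c0)" using trans[OF key[OF f1] fb] fn by simp
        then have "s (Suc n) f = x (Suc n)" using b by simp
        then show "f \<in> {f. \<forall>i\<le>Suc n. s i f = x i}" unfolding split using f1 by simp
      qed
      moreover have "(\<Prod>i<Suc n. \<delta> (x i) (w i) (x (Suc i))) = (1/2)^Suc n" using prS h by simp
      ultimately show ?case by (intro disjI1 exI[of _ "c(sel n := b)"] conjI)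
    qed
  next
    assume "{f. \<forall>i\<le>n. s i f = x i} = {} \<and> (\<Prod>i<n. \<delta> (x i) (w i) (x (Suc i))) = 0"
    then have E1: "{f. \<forall>i\<le>n. s i f = x i} = {}" and E2: "(\<Prod>i<n. \<delta> (x i) (w i) (x (Suc i))) = 0" by auto
    have "{f. \<forall>i\<le>Suc n. s i f = x i} = {}" unfolding split E1 by simp
    moreover have "(\<Prod>i<Suc n. \<delta> (x i) (w i) (x (Suc i))) = 0" using E2 by simp
    ultimately show ?case by (intro disjI2 conjI)
  qed
qed



lemma space_run_space[simp]: "space run_space = UNIV"
  by (auto simp: run_space_def space_PiM)

lemma box_sets: "finite J \<Longrightarrow> {r. \<forall>j\<in>J. r j \<in> F j} \<in> sets run_space"
proof -
  assume J: "finite J"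
  have "{r. \<forall>j\<in>J. r j \<in> F j} = prod_emb UNIV (\<lambda>_. count_space UNIV) J (\<Pi>\<^sub>E j\<in>J. F j)"
    by (auto simp: prod_emb_iff restrict_PiE_iff)
  then show ?thesis unfolding run_space_def using J by (simp add: sets_PiM_I)
qed

lemma cone_sets: "{r. \<forall>i\<le>n. r i = x i} \<in> sets run_space"
proof -
  have "{r. \<forall>i\<le>n. r i = x i} = {r. \<forall>j\<in>{..n}. r j \<in> {x j}}" by auto
  then show ?thesis using box_sets[of "{..n}" "\<lambda>i. {x i}"] by simp
qed

lemma meas_bits_run:
  assumes dep: "\<And>i f g. (\<And>j. j < i \<Longrightarrow> f (sel j) = g (sel j)) \<Longrightarrow> s i f = s i g"
  shows "(\<lambda>f i. s i f) \<in> bits \<rightarrow>\<^sub>M run_space"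
proof -
  have meas_i: "s i \<in> bits \<rightarrow>\<^sub>M count_space UNIV" for i
    by (rule fdep_meas[of "sel ` {..<i}"]) (auto intro: dep)
  show ?thesis
    unfolding run_space_def by (rule measurable_PiM_single') (auto simp: meas_i)
qed

lemma induced_from_bits:
  assumes pw: "prob_word_aut \<delta>" and bb: "binary_branching \<delta>" and inj: "inj sel"
    and dep: "\<And>i f g. (\<And>j. j < i \<Longrightarrow> f (sel j) = g (sel j)) \<Longrightarrow> s i f = s i g"
    and s0: "\<And>f. s 0 f = q0"
    and step: "\<And>i f. (s i f, w i, s (Suc i) (f(sel i := False)), s (Suc i) (f(sel i := True))) \<in> derived_trans \<delta>"
  shows "induced_run_measure \<delta> q0 w (distr bits run_space (\<lambda>f i. s i f))"
proof -
  note meas = meas_bits_run[of sel s, OF dep]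
  interpret P: prob_space bits by (rule prob_space_bits)
  show ?thesis unfolding induced_run_measure_def
  proof (intro conjI allI)
    show "prob_space (distr bits run_space (\<lambda>f i. s i f))" by (rule P.prob_space_distr[OF meas])
    show "sets (distr bits run_space (\<lambda>f i. s i f)) = sets run_space" by simp
    fix n x
    have "measure (distr bits run_space (\<lambda>f i. s i f)) {r \<in> space (distr bits run_space (\<lambda>f i. s i f)). \<forall>i\<le>n. r i = x i}
        = measure bits {f. \<forall>i\<le>n. s i f = x i}"
      using measure_distr[OF meas cone_sets[of n x]] by (simp add: vimage_def)
    also have "\<dots> = (if x 0 = q0 then \<Prod>i<n. \<delta> (x i) (w i) (x (Suc i)) else 0)"
    proof (cases "x 0 = q0")
      case False
      then have "{f. \<forall>i\<le>n. s i f = x i} = {}" using s0 by auto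
      then show ?thesis using False by (metis measure_empty)
    next
      case True
      from cone_shape[of \<delta> sel s q0 w x n, OF pw bb inj dep s0 step True] show ?thesis
      proof
        assume "\<exists>c. {f. \<forall>i\<le>n. s i f = x i} = {f. \<forall>j\<in>sel`{..<n}. f j = c j} \<and>
             (\<Prod>i<n. \<delta> (x i) (w i) (x (Suc i))) = (1/2)^n"
        then obtain c where R: "{f. \<forall>i\<le>n. s i f = x i} = {f. \<forall>j\<in>sel`{..<n}. f j = c j}"
          and pr: "(\<Prod>i<n. \<delta> (x i) (w i) (x (Suc i))) = (1/2)^n" by blast
        have "card (sel`{..<n}) = n" using inj by (simp add: card_image inj_on_subset)
        then show ?thesis using True R pr rect_measure[of "sel`{..<n}" c] by simp
      next
        assume E: "{f. \<forall>i\<le>n. s i f = x i} = {} \<and> (\<Prod>i<n. \<delta> (x i) (w i) (x (Suc i))) = 0"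
        then have e1: "{f. \<forall>i\<le>n. s i f = x i} = {}" and e2: "(\<Prod>i<n. \<delta> (x i) (w i) (x (Suc i))) = 0" by auto
        have "measure bits {f. \<forall>i\<le>n. s i f = x i} = 0" unfolding e1 by simp
        with e2 True show ?thesis by simp
      qed
    qed
    finally show "measure (distr bits run_space (\<lambda>f i. s i f)) {r \<in> space (distr bits run_space (\<lambda>f i. s i f)). \<forall>i\<le>n. r i = x i}
        = (if x 0 = q0 then \<Prod>i<n. \<delta> (x i) (w i) (x (Suc i)) else 0)" .
  qed
qed

lemma induced_unique:
  fixes M N :: "(nat \<Rightarrow> 'q::finite) measure"
  assumes M: "induced_run_measure \<delta> q0 w M" and N: "induced_run_measure \<delta> q0 w N"
  shows "M = N"
proof -
  interpret PM: prob_space M using M unfolding induced_run_measure_def by auto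
  interpret PN: prob_space N using N unfolding induced_run_measure_def by auto
  have sM: "sets M = sets run_space" and sN: "sets N = sets run_space"
    using M N unfolding induced_run_measure_def by auto
  have spM: "space M = UNIV" using sets_eq_imp_space_eq[OF sM] by simp
  have spN: "space N = UNIV" using sets_eq_imp_space_eq[OF sN] by simp
  have coneM: "measure M {r. \<forall>i\<le>n. r i = x i} = measure N {r. \<forall>i\<le>n. r i = x i}" for n x
    using M N spM spN unfolding induced_run_measure_def by auto
  show ?thesis
  proof (rule measure_eqI_PiM_infinite[of M UNIV "\<lambda>_. count_space UNIV" N])
    show "sets M = sets (Pi\<^sub>M UNIV (\<lambda>_. count_space UNIV))" using sM by (simp add: run_space_def)
    show "sets N = sets (Pi\<^sub>M UNIV (\<lambda>_. count_space UNIV))" using sN by (simp add: run_space_def)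
    show "finite_measure M" by (rule PM.finite_measure_axioms)
  next
    fix A :: "nat \<Rightarrow> 'q set" and J :: "nat set"
    assume J: "finite J"
    have X: "prod_emb UNIV (\<lambda>_. count_space UNIV) J (Pi\<^sub>E J A) = {r. \<forall>j\<in>J. r j \<in> A j}"
      by (auto simp: prod_emb_iff restrict_PiE_iff)
    define n where "n = Max (insert 0 J)"
    have jn: "j \<in> J \<Longrightarrow> j \<le> n" for j unfolding n_def using J by simp
    define Y where "Y = {ys::'q list. set ys \<subseteq> UNIV \<and> length ys = Suc n \<and> (\<forall>j\<in>J. ys ! j \<in> A j)}"
    define C where "C ys = {r. \<forall>i\<le>n. r i = (ys::'q list) ! i}" for ys
    have fY: "finite Y" unfolding Y_def
      by (rule finite_subset[OF _ finite_lists_length_eq[of UNIV "Suc n"]]) auto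
    have U: "{r. \<forall>j\<in>J. r j \<in> A j} = (\<Union>ys\<in>Y. C ys)"
    proof (intro equalityI subsetI)
      fix r assume r: "r \<in> {r. \<forall>j\<in>J. r j \<in> A j}"
      have mr: "map r [0..<Suc n] ! j = r j" if "j \<le> n" for j
        using that by (simp del: upt_Suc add: nth_map_upt)
      have "\<forall>j\<in>J. map r [0..<Suc n] ! j \<in> A j"
      proof
        fix j assume "j \<in> J"
        then show "map r [0..<Suc n] ! j \<in> A j" using r by (subst mr[OF jn[OF \<open>j \<in> J\<close>]]) auto
      qed
      then have "map r [0..<Suc n] \<in> Y"
        unfolding Y_def by (intro CollectI conjI) auto
      moreover have "r \<in> C (map r [0..<Suc n])" unfolding C_def
        by (auto simp del: upt_Suc simp: nth_map_upt)
      ultimately show "r \<in> (\<Union>ys\<in>Y. C ys)" by blast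
    next
      fix r assume "r \<in> (\<Union>ys\<in>Y. C ys)"
      then obtain ys where "ys \<in> Y" "r \<in> C ys" by blast
      then show "r \<in> {r. \<forall>j\<in>J. r j \<in> A j}" unfolding Y_def C_def using jn by auto
    qed
    have disj: "disjoint_family_on C Y"
      unfolding disjoint_family_on_def
    proof (intro ballI impI)
      fix ys zs assume "ys \<in> Y" "zs \<in> Y" "ys \<noteq> zs"
      then have lens: "length ys = Suc n" "length zs = Suc n" unfolding Y_def by auto
      have "\<exists>i<Suc n. ys ! i \<noteq> zs ! i"
      proof (rule ccontr)
        assume "\<not> (\<exists>i<Suc n. ys ! i \<noteq> zs ! i)"
        then have "\<forall>i<length ys. ys ! i = zs ! i" using lens by auto
        then have "ys = zs" using lens by (intro nth_equalityI) auto
        with \<open>ys \<noteq> zs\<close> show False by simp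
      qed
      then show "C ys \<inter> C zs = {}" unfolding C_def by (auto simp: less_Suc_eq_le)
    qed
    have CS: "C ` Y \<subseteq> sets run_space" unfolding C_def using cone_sets by auto
    have "measure M {r. \<forall>j\<in>J. r j \<in> A j} = (\<Sum>ys\<in>Y. measure M (C ys))"
      unfolding U by (rule measure_finite_Union[OF fY]) (use CS sM disj in auto)
    also have "\<dots> = (\<Sum>ys\<in>Y. measure N (C ys))" unfolding C_def using coneM by simp
    also have "\<dots> = measure N {r. \<forall>j\<in>J. r j \<in> A j}"
      unfolding U by (rule measure_finite_Union[OF fY, symmetric]) (use CS sN disj in auto)
    finally have "measure M {r. \<forall>j\<in>J. r j \<in> A j} = measure N {r. \<forall>j\<in>J. r j \<in> A j}" .
    then show "emeasure M (prod_emb UNIV (\<lambda>_. count_space UNIV) J (Pi\<^sub>E J A)) =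
               emeasure N (prod_emb UNIV (\<lambda>_. count_space UNIV) J (Pi\<^sub>E J A))"
      unfolding X by (simp add: PM.emeasure_eq_measure PN.emeasure_eq_measure)
  qed
qed

lemma acc_sets: "{r. parity_acc \<alpha> (r::nat \<Rightarrow> 'q::finite)} \<in> sets run_space"
proof -
  have aux: "(\<exists>S\<in>X. \<forall>q. (q \<in> S) = P q) \<longleftrightarrow> Collect P \<in> X" for X and P :: "'q \<Rightarrow> bool"
  proof
    assume "\<exists>S\<in>X. \<forall>q. (q \<in> S) = P q"
    then obtain S where S: "S \<in> X" and SP: "\<forall>q. (q \<in> S) = P q" by (elim bexE)
    have "S = Collect P" using SP by (simp add: set_eq_iff)
    with S show "Collect P \<in> X" by simp
  next
    assume "Collect P \<in> X"
    then show "\<exists>S\<in>X. \<forall>q. (q \<in> S) = P q" by (intro bexI[of _ "Collect P"]) auto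
  qed
  have eq: "{r. parity_acc \<alpha> r} = {r. \<exists>S\<in>{S. even (Min (\<alpha> ` S))}. \<forall>q. (q \<in> S) = (\<forall>m::nat. \<exists>n::nat. m < n \<and> r n = q)}"
    unfolding parity_acc_def INFM_nat aux
    by (simp add: setcompr_eq_image)
  have "Measurable.pred run_space (\<lambda>r. \<exists>S\<in>{S. even (Min (\<alpha> ` S))}. \<forall>q. (q \<in> S) = (\<forall>m::nat. \<exists>n::nat. m < n \<and> r n = (q::'q)))"
    unfolding run_space_def by measurable
  then show ?thesis unfolding eq by (simp add: pred_def)
qed



lemma dirB:
  assumes pw: "prob_word_aut \<delta>" and bb: "binary_branching \<delta>"
    and w: "w \<in> lang_as \<delta> q0 \<alpha>"
  shows "(\<lambda>u. w (length u)) \<in> lang_univ_qual (derived_trans \<delta>) q0 \<alpha>"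
  unfolding lang_univ_qual_def
proof (intro CollectI allI impI)
  fix \<rho> assume r: "tree_run (derived_trans \<delta>) q0 (\<lambda>u. w (length u)) \<rho>"
  define s where "s i \<pi> = \<rho> (map \<pi> [0..<i])" for i and \<pi> :: "nat \<Rightarrow> bool"
  have dep: "s i f = s i g" if "\<And>j. j < i \<Longrightarrow> f (id j) = g (id j)" for i f g
  proof -
    have "map f [0..<i] = map g [0..<i]" by (rule map_cong) (use that in auto)
    then show ?thesis unfolding s_def by (rule arg_cong)
  qed
  have s0: "s 0 f = q0" for f using r unfolding s_def tree_run_def by simp
  have sb: "s (Suc i) (f(i := b)) = \<rho> (map f [0..<i] @ [b])" for i f b
  proof -
    have "map (f(i := b)) [0..<i] = map f [0..<i]" by (auto intro!: map_cong)
    then show ?thesis unfolding s_def by simp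
  qed
  have step: "(s i f, w i, s (Suc i) (f(id i := False)), s (Suc i) (f(id i := True))) \<in> derived_trans \<delta>" for i f
  proof -
    have "(\<rho> u, w (length u), \<rho> (u @ [False]), \<rho> (u @ [True])) \<in> derived_trans \<delta>" for u
      using r unfolding tree_run_def by blast
    from this[of "map f [0..<i]"] show ?thesis by (simp only: id_apply sb) (simp add: s_def)
  qed
  define M where "M = distr bits run_space (\<lambda>f i. s i f)"
  have ind: "induced_run_measure \<delta> q0 w M"
    unfolding M_def by (rule induced_from_bits[OF pw bb _ dep s0 step]) simp
  have meas: "(\<lambda>f i. s i f) \<in> bits \<rightarrow>\<^sub>M run_space" by (rule meas_bits_run[of id s]) (rule dep)
  have wM: "\<forall>M. induced_run_measure \<delta> q0 w M \<longrightarrow> measure M {r \<in> space M. parity_acc \<alpha> r} = 1"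
    using w unfolding lang_as_def by (simp only: mem_Collect_eq)
  have m0: "measure M {r \<in> space M. parity_acc \<alpha> r} = 1" using wM ind by blast
  have spM: "space M = UNIV" unfolding M_def by simp
  have "1 = measure M {r \<in> space M. parity_acc \<alpha> r}" using m0 by simp
  also have "\<dots> = measure M {r. parity_acc \<alpha> r}" unfolding spM by simp
  also have "\<dots> = measure bits ((\<lambda>f i. s i f) -` {r. parity_acc \<alpha> r} \<inter> space bits)"
    unfolding M_def by (rule measure_distr[OF meas acc_sets])
  also have "(\<lambda>f i. s i f) -` {r. parity_acc \<alpha> r} \<inter> space bits = {\<pi> \<in> space coin. parity_acc \<alpha> (along \<rho> \<pi>)}"
  proof -
    have al: "along \<rho> \<pi> = (\<lambda>i. s i \<pi>)" for \<pi> by (simp add: along_def s_def fun_eq_iff)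
    show ?thesis by (simp add: coin_bits al vimage_def)
  qed
  finally have "measure bits {\<pi> \<in> space coin. parity_acc \<alpha> (along \<rho> \<pi>)} = 1" by simp
  then show "qual_accepting \<alpha> \<rho>" unfolding qual_accepting_def coin_bits .
qed

definition succ :: "('q \<Rightarrow> 'a \<Rightarrow> 'q \<Rightarrow> real) \<Rightarrow> 'q \<Rightarrow> 'a \<Rightarrow> bool \<Rightarrow> 'q" where
  "succ \<delta> q a b = (if b then (SOME p. \<delta> q a p = 1/2 \<and> p \<noteq> (SOME p. \<delta> q a p = 1/2)) else (SOME p. \<delta> q a p = 1/2))"

lemma succ_trans:
  assumes pw: "prob_word_aut \<delta>" and bb: "binary_branching \<delta>"
  shows "(q, a, succ \<delta> q a b, succ \<delta> q a (\<not> b)) \<in> derived_trans \<delta>"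
proof -
  obtain p1 p2 where d: "p1 \<noteq> p2" and P: "{p. \<delta> q a p = 1/2} = {p1, p2}"
    using two_succ[OF pw bb] by blast
  define c where "c = (SOME p. \<delta> q a p = 1/2)"
  have p12: "\<delta> q a p1 = 1/2" "\<delta> q a p2 = 1/2" using P by auto
  have c: "\<delta> q a c = 1/2" unfolding c_def by (rule someI[of _ p1]) (rule p12(1))
  define c' where "c' = (SOME p. \<delta> q a p = 1/2 \<and> p \<noteq> c)"
  have "\<exists>p. \<delta> q a p = 1/2 \<and> p \<noteq> c" using p12 d by metis
  then have c': "\<delta> q a c' = 1/2 \<and> c' \<noteq> c" unfolding c'_def by (rule someI_ex)
  have s: "succ \<delta> q a b = (if b then c' else c)" for b unfolding succ_def c_def c'_def by simp
  show ?thesis using c c' unfolding s derived_trans_def by (cases b) auto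
qed

fun stg :: "('q \<Rightarrow> 'a \<Rightarrow> 'q \<Rightarrow> real) \<Rightarrow> 'q \<Rightarrow> (bool list \<Rightarrow> 'a) \<Rightarrow> (bool list \<Rightarrow> bool) \<Rightarrow> bool list \<Rightarrow> 'q" where
  "stg \<delta> q0 t o' [] = q0"
| "stg \<delta> q0 t o' (b # v) = succ \<delta> (stg \<delta> q0 t o' v) (t (rev v)) (b \<noteq> o' (rev v))"

definition strun where "strun \<delta> q0 t o' u = stg \<delta> q0 t o' (rev u)"

lemma strun_Nil[simp]: "strun \<delta> q0 t o' [] = q0" by (simp add: strun_def)
lemma strun_snoc[simp]: "strun \<delta> q0 t o' (u @ [b]) = succ \<delta> (strun \<delta> q0 t o' u) (t u) (b \<noteq> o' u)"
  by (simp add: strun_def)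

lemma strun_dep: "(\<And>k. k < length u \<Longrightarrow> o1 (take k u) = o2 (take k u)) \<Longrightarrow> strun \<delta> q0 t o1 u = strun \<delta> q0 t o2 u"
proof (induction u rule: rev_induct)
  case Nil then show ?case by simp
next
  case (snoc b u)
  have "strun \<delta> q0 t o1 u = strun \<delta> q0 t o2 u"
  proof (rule snoc.IH)
    fix k assume k: "k < length u"
    then have "take k (u @ [b]) = take k u" by simp
    then show "o1 (take k u) = o2 (take k u)" using snoc.prems[of k] k by simp
  qed
  moreover have "o1 u = o2 u" using snoc.prems[of "length u"] by simp
  ultimately show ?case by simp
qed

lemma strun_run:
  assumes pw: "prob_word_aut \<delta>" and bb: "binary_branching \<delta>"
  shows "tree_run (derived_trans \<delta>) q0 t (strun \<delta> q0 t o')"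
  unfolding tree_run_def using succ_trans[OF pw bb] by simp



lemma dirC:
  fixes \<delta> :: "'q::finite \<Rightarrow> 'a \<Rightarrow> 'q \<Rightarrow> real"
  assumes pw: "prob_word_aut \<delta>" and bb: "binary_branching \<delta>"
    and t: "t \<in> lang_univ_qual (derived_trans \<delta>) q0 \<alpha>"
  shows "lang_as \<delta> q0 \<alpha> \<noteq> {}"
proof -
  define \<Phi> where "\<Phi> p = (\<lambda>i. strun \<delta> q0 t (snd p) (map (fst p) [0..<i]))"
    for p :: "(nat \<Rightarrow> bool) \<times> (bool list \<Rightarrow> bool)"
  interpret P1: prob_space "bits :: (nat \<Rightarrow> bool) measure" by (rule prob_space_bits)
  interpret P2: prob_space "bits :: (bool list \<Rightarrow> bool) measure" by (rule prob_space_bits)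
  interpret PP: pair_prob_space "bits :: (nat \<Rightarrow> bool) measure" "bits :: (bool list \<Rightarrow> bool) measure"
    by unfold_locales
  have mstr: "(\<lambda>ord. strun \<delta> q0 t ord u) \<in> (bits :: (bool list \<Rightarrow> bool) measure) \<rightarrow>\<^sub>M count_space UNIV" for u
    by (rule fdep_meas[of "(\<lambda>k. take k u) ` {..<length u}"]) (auto intro!: strun_dep)
  have mmap: "(\<lambda>\<pi>. map \<pi> [0..<i]) \<in> (bits :: (nat \<Rightarrow> bool) measure) \<rightarrow>\<^sub>M count_space UNIV" for i
    by (rule fdep_meas[of "{..<i}"]) (auto intro!: map_cong)
  have h1: "(\<lambda>p. strun \<delta> q0 t (snd p) u) \<in> (bits \<Otimes>\<^sub>M bits) \<rightarrow>\<^sub>M count_space UNIV" for u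
    using measurable_compose[OF measurable_snd mstr] .
  have h2: "(\<lambda>p. map (fst p) [0..<i]) \<in> (bits \<Otimes>\<^sub>M (bits :: (bool list \<Rightarrow> bool) measure)) \<rightarrow>\<^sub>M count_space UNIV" for i
    using measurable_compose[OF measurable_fst mmap] .
  have mcoord: "(\<lambda>p. \<Phi> p i) \<in> (bits \<Otimes>\<^sub>M bits) \<rightarrow>\<^sub>M count_space UNIV" for i
  proof -
    have "(\<lambda>p. (\<lambda>u p. strun \<delta> q0 t (snd p) u) ((\<lambda>p. map (fst p) [0..<i]) p) p) \<in> (bits \<Otimes>\<^sub>M bits) \<rightarrow>\<^sub>M count_space UNIV"
      by (rule measurable_compose_countable[OF h1 h2])
    then show ?thesis unfolding \<Phi>_def by simp
  qed
  have m\<Phi>: "(\<lambda>p i. \<Phi> p i) \<in> (bits \<Otimes>\<^sub>M bits) \<rightarrow>\<^sub>M run_space"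
    unfolding run_space_def by (rule measurable_PiM_single') (auto simp: mcoord)
  define R where "R = (\<lambda>p i. \<Phi> p i) -` (space run_space - {r. parity_acc \<alpha> r}) \<inter> space (bits \<Otimes>\<^sub>M bits)"
  have Rs: "R \<in> sets ((bits :: (nat \<Rightarrow> bool) measure) \<Otimes>\<^sub>M (bits :: (bool list \<Rightarrow> bool) measure))"
    unfolding R_def by (rule measurable_sets[OF m\<Phi>]) (rule sets.compl_sets[OF acc_sets])
  have spP: "space ((bits :: (nat \<Rightarrow> bool) measure) \<Otimes>\<^sub>M (bits :: (bool list \<Rightarrow> bool) measure)) = UNIV"
    by (simp add: space_pair_measure)
  have secO: "(\<lambda>\<pi>. (\<pi>, ord)) -` R = space bits - {\<pi> \<in> space bits. parity_acc \<alpha> (along (strun \<delta> q0 t ord) \<pi>)}" for ord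
  proof -
    have al: "along (strun \<delta> q0 t ord) \<pi> = \<Phi> (\<pi>, ord)" for \<pi> by (simp add: along_def \<Phi>_def fun_eq_iff)
    show ?thesis unfolding R_def spP by (auto simp: al)
  qed
  have zero1: "emeasure (bits :: (nat \<Rightarrow> bool) measure) ((\<lambda>\<pi>. (\<pi>, ord)) -` R) = 0" for ord
  proof -
    have "qual_accepting \<alpha> (strun \<delta> q0 t ord)" using t strun_run[OF pw bb] unfolding lang_univ_qual_def by blast
    then have m1: "measure bits {\<pi> \<in> space bits. parity_acc \<alpha> (along (strun \<delta> q0 t ord) \<pi>)} = 1"
      unfolding qual_accepting_def coin_bits .
    then have ev: "{\<pi> \<in> space bits. parity_acc \<alpha> (along (strun \<delta> q0 t ord) \<pi>)} \<in> sets (bits :: (nat \<Rightarrow> bool) measure)"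
      using measure_notin_sets by fastforce
    have "measure bits ((\<lambda>\<pi>. (\<pi>, ord)) -` R) = 0" unfolding secO using P1.prob_compl[OF ev] m1 by simp
    then show ?thesis by (simp add: P1.emeasure_eq_measure)
  qed
  have "emeasure (bits \<Otimes>\<^sub>M bits) R = 0"
    using PP.emeasure_pair_measure_alt2[OF Rs] zero1 by simp
  moreover have "emeasure (bits \<Otimes>\<^sub>M bits) R = (\<integral>\<^sup>+\<pi>. emeasure (bits :: (bool list \<Rightarrow> bool) measure) (Pair \<pi> -` R) \<partial>(bits :: (nat \<Rightarrow> bool) measure))"
    by (rule P2.emeasure_pair_measure_alt[OF Rs])
  ultimately have ae: "AE \<pi> in (bits :: (nat \<Rightarrow> bool) measure). emeasure (bits :: (bool list \<Rightarrow> bool) measure) (Pair \<pi> -` R) = 0"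
    using nn_integral_0_iff_AE[OF P2.measurable_emeasure_Pair[OF Rs]] by simp
  have "\<exists>\<pi>. emeasure (bits :: (bool list \<Rightarrow> bool) measure) (Pair \<pi> -` R) = 0"
  proof (rule ccontr)
    assume "\<not> ?thesis"
    then have "AE \<pi> in (bits :: (nat \<Rightarrow> bool) measure). False" using ae by simp
    then show False using P1.AE_False by simp
  qed
  then obtain \<pi> where \<pi>0: "emeasure (bits :: (bool list \<Rightarrow> bool) measure) (Pair \<pi> -` R) = 0" by blast
  define sel where "sel i = map \<pi> [0..<i]" for i
  define s where "s i ord = strun \<delta> q0 t ord (sel i)" for i ord
  define w where "w = along t \<pi>"
  have lsel: "length (sel i) = i" for i by (simp add: sel_def)
  have inj: "inj sel" by (rule injI) (metis lsel)
  have takesel: "take k (sel i) = sel k" if "k < i" for k i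
    using that by (simp add: sel_def take_map)
  have dep: "s i f = s i g" if h: "\<And>j. j < i \<Longrightarrow> f (sel j) = g (sel j)" for i f g
    unfolding s_def
  proof (rule strun_dep)
    fix k assume "k < length (sel i)"
    then have k: "k < i" by (simp add: lsel)
    show "f (take k (sel i)) = g (take k (sel i))" using h[OF k] takesel[OF k] by simp
  qed
  have s0: "s 0 f = q0" for f by (simp add: s_def sel_def)
  have selS: "sel (Suc i) = sel i @ [\<pi> i]" for i by (simp add: sel_def)
  have sprev: "strun \<delta> q0 t (f(sel i := b)) (sel i) = strun \<delta> q0 t f (sel i)" for f b i
  proof (rule strun_dep)
    fix k assume "k < length (sel i)"
    then have k: "k < i" by (simp add: lsel)
    then have "sel k \<noteq> sel i" using inj by (auto simp: inj_eq)
    then show "(f(sel i := b)) (take k (sel i)) = f (take k (sel i))" using takesel[OF k] by simp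
  qed
  have step: "(s i f, w i, s (Suc i) (f(sel i := False)), s (Suc i) (f(sel i := True))) \<in> derived_trans \<delta>" for i f
  proof -
    have e: "s (Suc i) (f(sel i := b)) = succ \<delta> (s i f) (t (sel i)) (\<pi> i \<noteq> b)" for b
      unfolding s_def selS by (simp add: sprev)
    have "w i = t (sel i)" by (simp add: w_def along_def sel_def)
    then show ?thesis unfolding e using succ_trans[OF pw bb, of "s i f" "t (sel i)" "\<pi> i"] by simp
  qed
  define N where "N = distr (bits :: (bool list \<Rightarrow> bool) measure) run_space (\<lambda>f i. s i f)"
  have indN: "induced_run_measure \<delta> q0 w N" unfolding N_def by (rule induced_from_bits[OF pw bb inj dep s0 step])
  have meas: "(\<lambda>f i. s i f) \<in> (bits :: (bool list \<Rightarrow> bool) measure) \<rightarrow>\<^sub>M run_space"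
    by (rule meas_bits_run[of sel s]) (rule dep)
  have "w \<in> lang_as \<delta> q0 \<alpha>"
    unfolding lang_as_def
  proof (intro CollectI allI impI)
    fix M assume "induced_run_measure \<delta> q0 w M"
    then have MN: "M = N" using induced_unique indN by blast
    have pre: "Pair \<pi> -` R = space bits - ((\<lambda>f i. s i f) -` {r. parity_acc \<alpha> r} \<inter> space (bits :: (bool list \<Rightarrow> bool) measure))"
      unfolding R_def spP by (auto simp: \<Phi>_def s_def sel_def)
    have ev: "(\<lambda>f i. s i f) -` {r. parity_acc \<alpha> r} \<inter> space (bits :: (bool list \<Rightarrow> bool) measure) \<in> sets bits"
      by (rule measurable_sets[OF meas acc_sets])
    have "measure (bits :: (bool list \<Rightarrow> bool) measure) (Pair \<pi> -` R) = 0" using \<pi>0 by (simp add: measure_def)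
    then have m1: "measure (bits :: (bool list \<Rightarrow> bool) measure) ((\<lambda>f i. s i f) -` {r. parity_acc \<alpha> r} \<inter> space bits) = 1"
      unfolding pre using P2.prob_compl[OF ev] by simp
    have spN: "space N = UNIV" unfolding N_def by simp
    have "measure N {r. parity_acc \<alpha> r} = measure (bits :: (bool list \<Rightarrow> bool) measure) ((\<lambda>f i. s i f) -` {r. parity_acc \<alpha> r} \<inter> space bits)"
      unfolding N_def by (rule measure_distr[OF meas acc_sets])
    then show "measure M {r \<in> space M. parity_acc \<alpha> r} = 1" using MN m1 spN by simp
  qed
  then show ?thesis by blast
qed

theorem mainTheorem12:
  fixes \<delta> :: "'q::finite \<Rightarrow> 'a::finite \<Rightarrow> 'q \<Rightarrow> real"
    and q0 :: 'q and \<alpha> :: "'q \<Rightarrow> nat"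
  assumes "prob_word_aut \<delta>" and "binary_branching \<delta>"
  shows "lang_as \<delta> q0 \<alpha> = {} \<longleftrightarrow> lang_univ_qual (derived_trans \<delta>) q0 \<alpha> = {}"
proof
  assume e: "lang_as \<delta> q0 \<alpha> = {}"
  show "lang_univ_qual (derived_trans \<delta>) q0 \<alpha> = {}"
  proof (rule ccontr)
    assume "lang_univ_qual (derived_trans \<delta>) q0 \<alpha> \<noteq> {}"
    then obtain t where "t \<in> lang_univ_qual (derived_trans \<delta>) q0 \<alpha>" by blast
    from dirC[OF assms this] e show False by simp
  qed
next
  assume e: "lang_univ_qual (derived_trans \<delta>) q0 \<alpha> = {}"
  show "lang_as \<delta> q0 \<alpha> = {}"
  proof (rule ccontr)
    assume "lang_as \<delta> q0 \<alpha> \<noteq> {}"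
    then obtain w where "w \<in> lang_as \<delta> q0 \<alpha>" by blast
    from dirB[OF assms this] e show False by simp
  qed
qed

end
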